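(* Let $a=\{a_1,\dots,a_m\}$ be a set of positive rational numbers different from $1$, and for $n\ge 0$ let $\mathcal{A}'_n(a)$ be the arrangement obtained from $\mathcal{A}_n(a)$ by removing the $n$ coordinate hyperplanes $x_i=0$. Then for every $n\ge 1$, $$\chi_{\mathcal{A}'_n(a)}(t)=\chi_{\mathcal{A}_n(a)}(t)+n\,\chi_{\mathcal{A}_{n-1}(a)}(t).$$
   Context: For a set $a=\{a_1,\dots,a_m\}$ of positive rational numbers different from $1$ and $n\ge 1$, $\mathcal{A}_n(a)$ denotes the hyperplane arrangement in $\mathbb{R}^n$ consisting of the hyperplanes $x_i=0$ ($1\le i\le n$), $x_i=x_j$ ($1\le i<j\le n$), and $x_i=a_rx_j$ ($1\le i\neq j\le n$, $1\le r\le m$); $\mathcal{A}_0(a)$ is the empty arrangement in $\mathbb{R}^0$, with characteristic polynomial $1$. For a finite arrangement $\mathcal{A}$ of affine hyperplanes in $\mathbb{R}^n$, the characteristic polynomial is $\chi_{\mathcal{A}}(t)=\sum_{\mathcal{B}}(-1)^{\#\mathcal{B}}t^{n-\operatorname{rank}(\mathcal{B})}$, the sum over subsets $\mathcal{B}\subseteq\mathcal{A}$ whose hyperplanes have nonempty common intersection, where $\operatorname{rank}(\mathcal{B})$ is the dimension of the span of the normal vectors of the hyperplanes in $\mathcal{B}$. *)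

theory Defs
  imports "HOL-Analysis.Analysis" "HOL-Library.Function_Algebras"
begin

text \<open>Points and vectors of R^n are modelled as functions nat => real vanishing
  at every index i >= n (coordinates are indexed 0..n-1).\<close>

definition Rn :: "nat \<Rightarrow> (nat \<Rightarrow> real) set" where
  "Rn n = {x. \<forall>i\<ge>n. x i = 0}"

definition fscale :: "real \<Rightarrow> (nat \<Rightarrow> real) \<Rightarrow> (nat \<Rightarrow> real)" where
  "fscale r w = (\<lambda>i. r * w i)"

definition dotn :: "nat \<Rightarrow> (nat \<Rightarrow> real) \<Rightarrow> (nat \<Rightarrow> real) \<Rightarrow> real" where
  "dotn n w x = (\<Sum>i<n. w i * x i)"

definition hyperplane :: "nat \<Rightarrow> (nat \<Rightarrow> real) \<Rightarrow> real \<Rightarrow> (nat \<Rightarrow> real) set" where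
  "hyperplane n w c = {x \<in> Rn n. dotn n w x = c}"

definition is_hyperplane :: "nat \<Rightarrow> (nat \<Rightarrow> real) set \<Rightarrow> bool" where
  "is_hyperplane n H \<longleftrightarrow> (\<exists>w c. w \<in> Rn n \<and> w \<noteq> 0 \<and> H = hyperplane n w c)"

definition normals :: "nat \<Rightarrow> (nat \<Rightarrow> real) set set \<Rightarrow> (nat \<Rightarrow> real) set" where
  "normals n B = {w. w \<in> Rn n \<and> w \<noteq> 0 \<and> (\<exists>H\<in>B. \<exists>c. H = hyperplane n w c)}"

definition arr_rank :: "nat \<Rightarrow> (nat \<Rightarrow> real) set set \<Rightarrow> nat" where
  "arr_rank n B = vector_space.dim fscale (normals n B)"

definition char_poly :: "nat \<Rightarrow> (nat \<Rightarrow> real) set set \<Rightarrow> real poly" where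
  "char_poly n A = (\<Sum>B \<in> {B. B \<subseteq> A \<and> Rn n \<inter> \<Inter>B \<noteq> {}}.
      (-1) ^ card B * monom 1 (n - arr_rank n B))"

definition unitv :: "nat \<Rightarrow> nat \<Rightarrow> real" where
  "unitv i = (\<lambda>j. if j = i then 1 else 0)"

definition coord_hyps :: "nat \<Rightarrow> (nat \<Rightarrow> real) set set" where
  "coord_hyps n = {hyperplane n (unitv i) 0 | i. i < n}"

definition arrA :: "rat set \<Rightarrow> nat \<Rightarrow> (nat \<Rightarrow> real) set set" where
  "arrA a n = coord_hyps n
     \<union> {hyperplane n (unitv i - unitv j) 0 | i j. i < j \<and> j < n}
     \<union> {hyperplane n (unitv i - fscale (of_rat r) (unitv j)) 0 | i j r.
          i < n \<and> j < n \<and> i \<noteq> j \<and> r \<in> a}"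

definition arrA' :: "rat set \<Rightarrow> nat \<Rightarrow> (nat \<Rightarrow> real) set set" where
  "arrA' a n = arrA a n - coord_hyps n"

end

theory Submission
  imports Defs
begin

lemma fscale_vs: "vector_space fscale"
  by unfold_locales (auto simp: fscale_def fun_eq_iff algebra_simps)

interpretation V: vector_space fscale by (rule fscale_vs)

lemma fscale_app[simp]: "fscale c w j = c * w j" by (simp add: fscale_def)

definition skip :: "nat \<Rightarrow> nat \<Rightarrow> nat" where "skip k j = (if j < k then j else Suc j)"
definition del :: "nat \<Rightarrow> (nat \<Rightarrow> real) \<Rightarrow> (nat \<Rightarrow> real)" where "del k w = (\<lambda>j. w (skip k j))"
definition ins :: "nat \<Rightarrow> (nat \<Rightarrow> real) \<Rightarrow> (nat \<Rightarrow> real)" where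
  "ins k y = (\<lambda>j. if j = k then 0 else if j < k then y j else y (j - 1))"

lemma linear_del: "Vector_Spaces.linear fscale fscale (del k)"
  unfolding Vector_Spaces.linear_iff by (auto simp: fscale_vs del_def fscale_def)
lemma linear_ins: "Vector_Spaces.linear fscale fscale (ins k)"
  unfolding Vector_Spaces.linear_iff by (auto simp: fscale_vs ins_def fscale_def fun_eq_iff)
lemma inj_ins: "inj (ins k)"
proof (rule injI)
  fix x y assume h: "ins k x = ins k y"
  show "x = y"
  proof
    fix j
    show "x j = y j"
    proof (cases "j < k")
      case True then show ?thesis using fun_cong[OF h, of j] by (simp add: ins_def)
    next
      case False then show ?thesis using fun_cong[OF h, of "Suc j"] by (simp add: ins_def)
    qed
  qed
qed

interpretation VP: vector_space_pair fscale fscale by unfold_locales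

lemma dim_inj_image:
  assumes "finite S"
  shows "V.dim (ins k ` S) = V.dim S"
proof -
  obtain B where B: "B \<subseteq> S" "V.independent B" "S \<subseteq> V.span B" "card B = V.dim S"
    using V.basis_exists by blast
  have ind: "V.independent (ins k ` B)"
    using VP.linear_independent_injective_image[OF linear_ins B(2)] inj_ins
    by (meson inj_on_subset subset_UNIV)
  have sp: "V.span (ins k ` B) = ins k ` V.span B"
    using VP.linear_span_image[OF linear_ins] by blast
  have "card (ins k ` B) = V.dim (ins k ` S)"
    by (rule V.basis_card_eq_dim) (use B sp ind in auto)
  moreover have "card (ins k ` B) = card B"
    using inj_ins[of k] by (meson card_image inj_on_subset subset_UNIV)
  ultimately show ?thesis using B by simp
qed

lemma dim_insert_new:
  assumes "finite S" "x \<notin> V.span S"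
  shows "V.dim (insert x S) = Suc (V.dim S)"
proof -
  obtain B where B: "B \<subseteq> S" "V.independent B" "S \<subseteq> V.span B" "card B = V.dim S"
    using V.basis_exists by blast
  have fB: "finite B" using B(1) assms(1) finite_subset by blast
  have xB: "x \<notin> V.span B" using assms(2) B(1) V.span_mono by blast
  hence xnB: "x \<notin> B" using V.span_base by blast
  have ind: "V.independent (insert x B)" using V.independent_insertI[OF xB B(2)] .
  have "card (insert x B) = V.dim (insert x S)"
  proof (rule V.basis_card_eq_dim)
    show "insert x B \<subseteq> insert x S" using B by auto
    show "insert x S \<subseteq> V.span (insert x B)"
      using B(3) V.span_mono[of B "insert x B"] V.span_base[of x "insert x B"] by auto
  qed (rule ind)
  thus ?thesis using fB xnB B(4) by simp
qed

lemma dim_insert_unitv: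
  assumes "finite W"
  shows "V.dim (insert (unitv k) W) = Suc (V.dim (del k ` W))"
proof -
  define g where "g w = ins k (del k w)" for w
  have g: "g w = w - fscale (w k) (unitv k)" for w
    by (auto simp: g_def fun_eq_iff ins_def del_def skip_def unitv_def)
  have "V.span (insert (unitv k) W) = V.span (insert (unitv k) (g ` W))"
  proof (rule V.span_eq[THEN iffD2], rule conjI)
    show "insert (unitv k) W \<subseteq> V.span (insert (unitv k) (g ` W))"
    proof
      fix v assume "v \<in> insert (unitv k) W"
      then consider "v = unitv k" | "v \<in> W" by auto
      then show "v \<in> V.span (insert (unitv k) (g ` W))"
      proof cases
        case 1 then show ?thesis by (simp add: V.span_base)
      next
        case 2
        have "v = g v + fscale (v k) (unitv k)" by (simp add: g)
        moreover have "g v \<in> V.span (insert (unitv k) (g ` W))" using 2 by (simp add: V.span_base)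
        moreover have "fscale (v k) (unitv k) \<in> V.span (insert (unitv k) (g ` W))"
          by (simp add: V.span_base V.span_scale)
        ultimately show ?thesis by (metis V.span_add)
      qed
    qed
    show "insert (unitv k) (g ` W) \<subseteq> V.span (insert (unitv k) W)"
    proof
      fix v assume "v \<in> insert (unitv k) (g ` W)"
      then consider "v = unitv k" | w where "w \<in> W" "v = g w" by auto
      then show "v \<in> V.span (insert (unitv k) W)"
      proof cases
        case 1 then show ?thesis by (simp add: V.span_base)
      next
        case 2
        have "w \<in> V.span (insert (unitv k) W)" using 2 by (simp add: V.span_base)
        moreover have "fscale (w k) (unitv k) \<in> V.span (insert (unitv k) W)"
          by (simp add: V.span_base V.span_scale)
        ultimately show ?thesis using 2 g by (metis V.span_diff)
      qed
    qed
  qed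
  hence "V.dim (insert (unitv k) W) = V.dim (insert (unitv k) (g ` W))"
    using V.span_eq_dim by blast
  also have "\<dots> = Suc (V.dim (g ` W))"
  proof (rule dim_insert_new)
    show "finite (g ` W)" using assms by simp
    have "V.span (g ` W) \<subseteq> {x. x k = 0}"
    proof (rule V.span_minimal)
      show "g ` W \<subseteq> {x. x k = 0}" by (auto simp: g unitv_def)
      show "V.subspace {x. x k = 0}" by (auto simp: V.subspace_def)
    qed
    thus "unitv k \<notin> V.span (g ` W)" by (auto simp: unitv_def)
  qed
  also have "g ` W = ins k ` (del k ` W)" by (auto simp: g_def)
  also have "V.dim \<dots> = V.dim (del k ` W)" by (rule dim_inj_image) (use assms in simp)
  finally show ?thesis .
qed


lemma dotn_unitv: "j < n \<Longrightarrow> dotn n w (unitv j) = w j"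
  by (simp add: dotn_def unitv_def if_distrib cong: if_cong)

lemma dotn_diff: "dotn n w (x - y) = dotn n w x - dotn n w y"
  by (simp add: dotn_def algebra_simps sum_subtractf)

lemma dotn_scale: "dotn n w (fscale c x) = c * dotn n w x"
  by (simp add: dotn_def algebra_simps sum_distrib_left)

lemma dotn_scale1: "dotn n (fscale c w) x = c * dotn n w x"
  by (simp add: dotn_def algebra_simps sum_distrib_left)

lemma dotn_zero: "dotn n w 0 = 0" by (simp add: dotn_def)

lemma zero_Rn: "0 \<in> Rn n" by (simp add: Rn_def)

lemma HP:
  assumes w: "w \<in> Rn n" and v: "v \<in> Rn n" "v \<noteq> 0"
    and eq: "hyperplane n w c = hyperplane n v 0"
  shows "\<exists>k. w = fscale k v"
proof -
  obtain p where p: "v p \<noteq> 0" using v(2) by (auto simp: fun_eq_iff)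
  have pn: "p < n"
  proof (rule ccontr)
    assume "\<not> p < n" hence "v p = 0" using v(1) by (simp add: Rn_def)
    with p show False by simp
  qed
  have c0: "c = 0"
  proof -
    have "0 \<in> hyperplane n v 0" by (simp add: hyperplane_def zero_Rn dotn_zero)
    hence "0 \<in> hyperplane n w c" using eq by simp
    thus ?thesis by (simp add: hyperplane_def dotn_zero)
  qed
  have wj: "w j = (w p / v p) * v j" for j
  proof (cases "j < n")
    case False thus ?thesis using w v by (simp add: Rn_def)
  next
    case True
    define x where "x = unitv j - fscale (v j / v p) (unitv p)"
    have xR: "x \<in> Rn n" using True pn by (auto simp: x_def Rn_def unitv_def)
    have "dotn n v x = 0" using True pn p by (simp add: x_def dotn_diff dotn_scale dotn_unitv)
    hence "x \<in> hyperplane n v 0" using xR by (simp add: hyperplane_def)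
    hence "x \<in> hyperplane n w c" using eq by simp
    hence "dotn n w x = 0" using c0 by (simp add: hyperplane_def)
    hence "w j - v j / v p * w p = 0"
      by (simp only: x_def dotn_diff dotn_scale dotn_unitv[OF True] dotn_unitv[OF pn])
    hence "w j = v j / v p * w p" by simp
    thus ?thesis by (simp only: divide_inverse mult_ac)
  qed
  have "w = fscale (w p / v p) v" unfolding fun_eq_iff fscale_app using wj by blast
  thus ?thesis by blast
qed

lemma hp_scale: assumes "c \<noteq> 0" shows "hyperplane n (fscale c v) 0 = hyperplane n v 0"
proof -
  have "dotn n (fscale c v) x = 0 \<longleftrightarrow> dotn n v x = 0" for x
    using assms by (simp only: dotn_scale1 mult_eq_0_iff) simp
  thus ?thesis unfolding hyperplane_def by blast
qed

definition goodv :: "nat \<Rightarrow> (nat \<Rightarrow> real) set" where "goodv n = {w. w \<in> Rn n \<and> w \<noteq> 0}"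

lemma rank_image:
  assumes "V \<subseteq> goodv n"
  shows "arr_rank n ((\<lambda>w. hyperplane n w 0) ` V) = V.dim V"
proof -
  have "V.span (normals n ((\<lambda>w. hyperplane n w 0) ` V)) = V.span V"
  proof (rule V.span_eq[THEN iffD2], rule conjI)
    show "normals n ((\<lambda>w. hyperplane n w 0) ` V) \<subseteq> V.span V"
    proof
      fix w assume "w \<in> normals n ((\<lambda>w. hyperplane n w 0) ` V)"
      then obtain v c where wv: "w \<in> Rn n" "v \<in> V" "hyperplane n v 0 = hyperplane n w c"
        by (auto simp: normals_def)
      then obtain k where "w = fscale k v" using HP[of w n v c] assms by (auto simp: goodv_def)
      thus "w \<in> V.span V" using wv(2) by (simp add: V.span_base V.span_scale)
    qed
    show "V \<subseteq> V.span (normals n ((\<lambda>w. hyperplane n w 0) ` V))"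
      using assms by (force simp: normals_def goodv_def intro!: V.span_base)
  qed
  thus ?thesis unfolding arr_rank_def using V.span_eq_dim by blast
qed

lemma skip_lt: "k < n \<Longrightarrow> j < n - 1 \<Longrightarrow> skip k j < n" by (auto simp: skip_def)

lemma skip_image: assumes k: "k < n" shows "skip k ` {..<n-1} = {..<n} - {k}"
proof (rule set_eqI, rule iffI)
  fix x assume "x \<in> skip k ` {..<n-1}"
  then obtain j where j: "j < n - 1" "x = skip k j" by auto
  show "x \<in> {..<n} - {k}"
  proof (cases "j < k")
    case True thus ?thesis using j k by (simp add: skip_def)
  next
    case False thus ?thesis using j k by (simp add: skip_def)
  qed
next
  fix x assume x: "x \<in> {..<n} - {k}"
  show "x \<in> skip k ` {..<n-1}"
  proof (cases "x < k")
    case True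
    hence "x = skip k x" "x < n - 1" using k by (simp_all add: skip_def)
    thus ?thesis by blast
  next
    case False
    have "x - 1 < n - 1" "\<not> x - 1 < k" "x \<noteq> 0" using k x False by auto
    hence "x = skip k (x - 1)" "x - 1 < n - 1" by (simp_all add: skip_def)
    thus ?thesis by blast
  qed
qed

lemma inj_skip: "inj (skip k)" by (auto simp: inj_def skip_def split: if_splits)

lemma ins_skip: "ins k y (skip k j) = y j" by (auto simp: ins_def skip_def)

lemma dotn_ins:
  assumes "k < n"
  shows "dotn n w (ins k y) = dotn (n-1) (del k w) y"
proof -
  have "{..<n} = insert k (skip k ` {..<n-1})" using skip_image[OF assms] assms by auto
  hence "dotn n w (ins k y) = (\<Sum>j\<in>insert k (skip k ` {..<n-1}). w j * ins k y j)"
    by (simp add: dotn_def)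
  also have "\<dots> = (\<Sum>j\<in>skip k ` {..<n-1}. w j * ins k y j)"
    by (subst sum.insert) (auto simp: skip_def ins_def)
  also have "\<dots> = (\<Sum>j<n-1. w (skip k j) * ins k y (skip k j))"
    by (subst sum.reindex) (auto intro: inj_on_subset[OF inj_skip])
  also have "\<dots> = dotn (n-1) (del k w) y" by (simp add: dotn_def del_def ins_skip)
  finally show ?thesis .
qed

lemma ins_Rn: "k < n \<Longrightarrow> y \<in> Rn (n-1) \<Longrightarrow> ins k y \<in> Rn n"
  by (auto simp: Rn_def ins_def)

lemma del_Rn: "k < n \<Longrightarrow> w \<in> Rn n \<Longrightarrow> del k w \<in> Rn (n-1)"
  by (auto simp: Rn_def del_def skip_def)

definition restr :: "nat \<Rightarrow> nat \<Rightarrow> (nat \<Rightarrow> real) set \<Rightarrow> (nat \<Rightarrow> real) set" where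
  "restr m k H = {y \<in> Rn m. ins k y \<in> H}"

lemma restr_hp:
  assumes "k < n"
  shows "restr (n-1) k (hyperplane n w 0) = hyperplane (n-1) (del k w) 0"
  using assms by (auto simp: restr_def hyperplane_def dotn_ins ins_Rn)

lemma del_zero_imp:
  assumes "del k w = 0"
  shows "w = fscale (w k) (unitv k)"
proof
  fix j
  show "w j = fscale (w k) (unitv k) j"
  proof (cases "j = k")
    case False
    hence "j = skip k (if j < k then j else j - 1)" by (auto simp: skip_def)
    hence "w j = del k w (if j < k then j else j - 1)" by (simp add: del_def)
    thus ?thesis using assms False by (simp add: unitv_def)
  qed (simp add: unitv_def)
qed


lemma sum_insert_split:
  fixes h :: "'a set \<Rightarrow> 'c::comm_monoid_add"
  assumes "finite D" "x \<notin> D" "P \<subseteq> Pow (insert x D)"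
  shows "sum h P = sum h {B \<in> P. x \<notin> B} + sum (\<lambda>B. h (insert x B)) {B. B \<subseteq> D \<and> insert x B \<in> P}"
proof -
  have fin: "finite P" using assms by (meson finite_Pow_iff finite_insert finite_subset)
  have "P = {B \<in> P. x \<notin> B} \<union> {B \<in> P. x \<in> B}" by auto
  hence "sum h P = sum h {B \<in> P. x \<notin> B} + sum h {B \<in> P. x \<in> B}"
    using fin by (metis (no_types, lifting) sum.union_inter_neutral finite_Un mem_Collect_eq Int_iff)
  also have "{B \<in> P. x \<in> B} = insert x ` {B. B \<subseteq> D \<and> insert x B \<in> P}"
  proof (rule set_eqI, rule iffI)
    fix B assume B: "B \<in> {B \<in> P. x \<in> B}"
    hence "B - {x} \<subseteq> D" "insert x (B - {x}) = B" using assms(3) by auto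
    thus "B \<in> insert x ` {B. B \<subseteq> D \<and> insert x B \<in> P}" using B by (metis (mono_tags, lifting) image_eqI mem_Collect_eq)
  qed auto
  also have "sum h (insert x ` {B. B \<subseteq> D \<and> insert x B \<in> P}) = sum (\<lambda>B. h (insert x B)) {B. B \<subseteq> D \<and> insert x B \<in> P}"
  proof (rule sum.reindex[unfolded comp_def])
    show "inj_on (insert x) {B. B \<subseteq> D \<and> insert x B \<in> P}"
      using assms(2) by (auto simp: inj_on_def)
  qed
  finally show ?thesis .
qed

lemma fiber_count:
  assumes "finite D"
  shows "(\<Sum>B\<in>{B. B \<subseteq> D \<and> f ` B = R}. (-1::'c::comm_ring_1)^card B) = (if R \<subseteq> f ` D then (-1)^card R else 0)"
  using assms
proof (induction D arbitrary: R rule: finite_induct)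
  case empty
  show ?case
  proof (cases "R = {}")
    case True
    have "{B. B \<subseteq> {} \<and> f ` B = R} = {{}}" using True by auto
    thus ?thesis unfolding True by simp
  next
    case False
    have "{B. B \<subseteq> {} \<and> f ` B = R} = {}" using False by auto
    thus ?thesis using False by (simp only: sum.empty) simp
  qed
next
  case (insert x D)
  let ?S = "\<lambda>D R. {B. B \<subseteq> D \<and> f ` B = R}"
  have fR: "finite R" if "R \<subseteq> f ` insert x D" using that insert(1) finite_subset by blast
  have "(\<Sum>B\<in>?S (insert x D) R. (-1::'c)^card B) =
        (\<Sum>B\<in>{B \<in> ?S (insert x D) R. x \<notin> B}. (-1)^card B) + (\<Sum>B\<in>{B. B \<subseteq> D \<and> insert x B \<in> ?S (insert x D) R}. (-1)^card (insert x B))"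
    by (rule sum_insert_split) (use insert.hyps in blast)+
  also have "{B \<in> ?S (insert x D) R. x \<notin> B} = ?S D R" using insert.hyps by auto
  also have "{B. B \<subseteq> D \<and> insert x B \<in> ?S (insert x D) R} = {B. B \<subseteq> D \<and> insert (f x) (f ` B) = R}" by auto
  also have "(\<Sum>B\<in>{B. B \<subseteq> D \<and> insert (f x) (f ` B) = R}. (-1::'c)^card (insert x B))
      = - (\<Sum>B\<in>{B. B \<subseteq> D \<and> insert (f x) (f ` B) = R}. (-1::'c)^card B)"
  proof -
    have "(\<Sum>B\<in>{B. B \<subseteq> D \<and> insert (f x) (f ` B) = R}. (-1::'c)^card (insert x B))
        = (\<Sum>B\<in>{B. B \<subseteq> D \<and> insert (f x) (f ` B) = R}. - ((-1::'c)^card B))"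
    proof (rule sum.cong)
      fix B assume "B \<in> {B. B \<subseteq> D \<and> insert (f x) (f ` B) = R}"
      hence "finite B" "x \<notin> B" using insert(1,2) finite_subset by auto
      thus "(-1::'c)^card (insert x B) = - ((-1)^card B)" by simp
    qed simp
    thus ?thesis by (simp add: sum_negf)
  qed
  also have "(\<Sum>B\<in>{B. B \<subseteq> D \<and> insert (f x) (f ` B) = R}. (-1::'c)^card B)
     = (if f x \<in> R then (\<Sum>B\<in>?S D R. (-1)^card B) + (\<Sum>B\<in>?S D (R - {f x}). (-1)^card B) else 0)"
  proof (cases "f x \<in> R")
    case True
    have eq: "{B. B \<subseteq> D \<and> insert (f x) (f ` B) = R} = ?S D R \<union> ?S D (R - {f x})"
      using True by (auto, metis imageI)
    have "(\<Sum>B\<in>?S D R \<union> ?S D (R - {f x}). (-1::'c)^card B) = (\<Sum>B\<in>?S D R. (-1)^card B) + (\<Sum>B\<in>?S D (R - {f x}). (-1)^card B)"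
      by (rule sum.union_disjoint) (use insert(1) True in auto)
    thus ?thesis using eq True by simp
  next
    case False
    hence "{B. B \<subseteq> D \<and> insert (f x) (f ` B) = R} = {}" by auto
    thus ?thesis using False by (simp only: sum.empty) simp
  qed
  finally have L: "(\<Sum>B\<in>?S (insert x D) R. (-1::'c)^card B) = (\<Sum>B\<in>?S D R. (-1)^card B) -
     (if f x \<in> R then (\<Sum>B\<in>?S D R. (-1)^card B) + (\<Sum>B\<in>?S D (R - {f x}). (-1)^card B) else 0)" by simp
  show ?case
  proof (cases "f x \<in> R")
    case True
    have "R \<subseteq> f ` insert x D \<longleftrightarrow> R - {f x} \<subseteq> f ` D" using True by auto
    moreover have "R \<subseteq> f ` insert x D \<Longrightarrow> card R = Suc (card (R - {f x}))"
      using True fR by (metis card_Suc_Diff1 insert_subset subset_insertI)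
    moreover have "R \<subseteq> f ` insert x D \<Longrightarrow> (-1::'c)^card R = - ((-1)^card (R - {f x}))"
      using calculation(2) by simp
    ultimately show ?thesis using L True insert.IH[of "R - {f x}"] by (simp only: if_True if_False) auto
  next
    case False
    have "R \<subseteq> f ` insert x D \<longleftrightarrow> R \<subseteq> f ` D" using False by auto
    thus ?thesis using L False insert.IH[of R] by simp
  qed
qed

lemma group_restr:
  fixes f :: "'a \<Rightarrow> 'b" and rk :: "'a set \<Rightarrow> nat" and rk' :: "'b set \<Rightarrow> nat" and g :: "nat \<Rightarrow> 'c::comm_ring_1"
  assumes "finite D" "\<And>B. B \<subseteq> D \<Longrightarrow> rk B = rk' (f ` B)"
  shows "(\<Sum>B\<in>Pow D. (-1)^card B * g (rk B)) = (\<Sum>R\<in>Pow (f ` D). (-1)^card R * g (rk' R))"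
proof -
  have "(\<Sum>B\<in>Pow D. (-1)^card B * g (rk B)) = (\<Sum>B\<in>Pow D. (-1)^card B * g (rk' (f ` B)))"
    using assms(2) by (intro sum.cong) auto
  also have "\<dots> = (\<Sum>R\<in>Pow (f ` D). \<Sum>B\<in>{B \<in> Pow D. f ` B = R}. (-1)^card B * g (rk' (f ` B)))"
    by (rule sum.group[symmetric]) (use assms(1) in auto)
  also have "\<dots> = (\<Sum>R\<in>Pow (f ` D). (\<Sum>B\<in>{B. B \<subseteq> D \<and> f ` B = R}. (-1)^card B) * g (rk' R))"
  proof (rule sum.cong[OF refl])
    fix R
    have "(\<Sum>B\<in>{B \<in> Pow D. f ` B = R}. (-1)^card B * g (rk' (f ` B))) = (\<Sum>B\<in>{B. B \<subseteq> D \<and> f ` B = R}. (-1)^card B * g (rk' R))"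
      by (rule sum.cong) auto
    thus "(\<Sum>B\<in>{B \<in> Pow D. f ` B = R}. (-1)^card B * g (rk' (f ` B))) = (\<Sum>B\<in>{B. B \<subseteq> D \<and> f ` B = R}. (-1)^card B) * g (rk' R)"
      by (simp add: sum_distrib_right)
  qed
  also have "\<dots> = (\<Sum>R\<in>Pow (f ` D). (-1)^card R * g (rk' R))"
  proof (rule sum.cong[OF refl])
    fix R assume "R \<in> Pow (f ` D)"
    thus "(\<Sum>B\<in>{B. B \<subseteq> D \<and> f ` B = R}. (-1)^card B) * g (rk' R) = (-1)^card R * g (rk' R)"
      using fiber_count[OF assms(1), of f R, where 'c='c] by simp
  qed
  finally show ?thesis .
qed


definition idx :: "nat \<Rightarrow> nat \<Rightarrow> nat" where "idx k i = (if i < k then i else i - 1)"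

lemma del_unitv: "del k (unitv i) = (if i = k then 0 else unitv (idx k i))"
  by (auto simp: fun_eq_iff del_def unitv_def skip_def idx_def)

lemma idx_skip[simp]: "idx k (skip k i) = i" by (simp add: idx_def skip_def)
lemma skip_ne[simp]: "skip k i \<noteq> k" by (simp add: skip_def)
lemma del_unitv_skip[simp]: "del k (unitv (skip k i)) = unitv i" by (simp add: del_unitv)
lemma del_diff[simp]: "del k (v - w) = del k v - del k w" by (simp add: del_def fun_eq_iff)
lemma del_fscale[simp]: "del k (fscale c w) = fscale c (del k w)" by (simp add: del_def fun_eq_iff)
lemma skip_mono: "i < j \<Longrightarrow> skip k i < skip k j" by (simp add: skip_def)
lemma idx_lt: "i \<noteq> k \<Longrightarrow> i < n \<Longrightarrow> k < n \<Longrightarrow> idx k i < n - 1" by (auto simp: idx_def)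
lemma idx_mono: "i < j \<Longrightarrow> i \<noteq> k \<Longrightarrow> j \<noteq> k \<Longrightarrow> idx k i < idx k j" by (auto simp: idx_def)
lemma idx_inj: "i \<noteq> j \<Longrightarrow> i \<noteq> k \<Longrightarrow> j \<noteq> k \<Longrightarrow> idx k i \<noteq> idx k j" by (auto simp: idx_def)

lemma hp_neg: "hyperplane n (- w) 0 = hyperplane n w 0"
proof -
  have "- w = fscale (-1) w" by (simp add: fun_eq_iff)
  thus ?thesis using hp_scale[of "-1" n w] by simp
qed

lemma unitv_Rn: "i < n \<Longrightarrow> unitv i \<in> Rn n" by (simp add: Rn_def unitv_def)

lemma Rn_diff: "v \<in> Rn n \<Longrightarrow> w \<in> Rn n \<Longrightarrow> v - w \<in> Rn n" by (simp add: Rn_def)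
lemma Rn_scale: "w \<in> Rn n \<Longrightarrow> fscale c w \<in> Rn n" by (simp add: Rn_def)

lemma ne_coord:
  assumes "w \<in> Rn n" "j < n" "w p \<noteq> 0" "p \<noteq> j"
  shows "hyperplane n w 0 \<noteq> hyperplane n (unitv j) 0"
proof
  assume "hyperplane n w 0 = hyperplane n (unitv j) 0"
  moreover have "unitv j \<noteq> 0" by (auto simp: unitv_def fun_eq_iff)
  ultimately obtain c where "w = fscale c (unitv j)"
    using HP[of w n "unitv j" 0] assms unitv_Rn[of j n] by blast
  hence "w p = 0" using assms(4) by (simp add: unitv_def)
  thus False using assms(3) by simp
qed

lemma zero_in_arrA: "H \<in> arrA a n \<Longrightarrow> 0 \<in> H"
  by (auto simp: arrA_def coord_hyps_def hyperplane_def zero_Rn dotn_zero)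

lemma good_arrA:
  assumes "\<forall>r\<in>a. r > 0 \<and> r \<noteq> 1" "H \<in> arrA a n"
  shows "\<exists>w\<in>goodv n. H = hyperplane n w 0"
  using assms(2) unfolding arrA_def coord_hyps_def
proof (elim UnE CollectE exE conjE)
  fix i assume "H = hyperplane n (unitv i) 0" "i < n"
  moreover have "unitv i \<noteq> 0" by (auto simp: unitv_def fun_eq_iff)
  moreover have "unitv i \<in> goodv n" using \<open>i < n\<close> calculation(3) by (simp add: goodv_def unitv_Rn)
  ultimately show ?thesis by blast
next
  fix i j assume h: "H = hyperplane n (unitv i - unitv j) 0" "i < j" "j < n"
  have "(unitv i - unitv j) i \<noteq> 0" using h by (simp add: unitv_def)
  hence "unitv i - unitv j \<in> goodv n" using h by (auto simp: goodv_def intro!: Rn_diff unitv_Rn)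
  thus ?thesis using h by blast
next
  fix i j r assume h: "H = hyperplane n (unitv i - fscale (of_rat r) (unitv j)) 0" "i < n" "j < n" "i \<noteq> j" "r \<in> a"
  have "(unitv i - fscale (of_rat r) (unitv j)) i \<noteq> 0" using h by (simp add: unitv_def)
  hence "unitv i - fscale (of_rat r) (unitv j) \<in> goodv n" using h by (auto simp: goodv_def intro!: Rn_diff unitv_Rn Rn_scale)
  thus ?thesis using h by blast
qed

lemma finite_arrA:
  assumes "finite a"
  shows "finite (arrA a n)"
proof -
  have "coord_hyps n = (\<lambda>i. hyperplane n (unitv i) 0) ` {..<n}" by (auto simp: coord_hyps_def)
  moreover have "{hyperplane n (unitv i - unitv j) 0 | i j. i < j \<and> j < n} \<subseteq>
      (\<lambda>(i,j). hyperplane n (unitv i - unitv j) 0) ` ({..<n} \<times> {..<n})" by auto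
  moreover have "{hyperplane n (unitv i - fscale (of_rat r) (unitv j)) 0 | i j r. i < n \<and> j < n \<and> i \<noteq> j \<and> r \<in> a} \<subseteq>
      (\<lambda>(i,j,r). hyperplane n (unitv i - fscale (of_rat r) (unitv j)) 0) ` ({..<n} \<times> {..<n} \<times> a)" by force
  ultimately show ?thesis unfolding arrA_def using assms
    by (metis (no_types, lifting) finite_Un finite_SigmaI finite_imageI finite_lessThan finite_subset)
qed


definition chi :: "nat \<Rightarrow> (nat \<Rightarrow> real) set set \<Rightarrow> real poly" where
  "chi n D = (\<Sum>B\<in>Pow D. (-1)^card B * monom 1 (n - arr_rank n B))"

lemma char_poly_chi:
  assumes "D \<subseteq> arrA a n"
  shows "char_poly n D = chi n D"
proof -
  have "{B. B \<subseteq> D \<and> Rn n \<inter> \<Inter>B \<noteq> {}} = Pow D"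
  proof (rule set_eqI, rule iffI)
    fix B assume "B \<in> Pow D"
    hence "0 \<in> Rn n \<inter> \<Inter>B" using assms zero_in_arrA zero_Rn by blast
    thus "B \<in> {B. B \<subseteq> D \<and> Rn n \<inter> \<Inter>B \<noteq> {}}" using \<open>B \<in> Pow D\<close> by blast
  qed auto
  thus ?thesis unfolding char_poly_def chi_def by simp
qed

lemma chi_insert:
  assumes "finite D" "h \<notin> D"
  shows "chi n (insert h D) = chi n D - (\<Sum>B\<in>Pow D. (-1)^card B * (monom 1 (n - arr_rank n (insert h B)) :: real poly))"
proof -
  have "chi n (insert h D) = (\<Sum>B\<in>Pow D \<union> insert h ` Pow D. (-1)^card B * (monom 1 (n - arr_rank n B) :: real poly))"
    unfolding chi_def Pow_insert ..
  also have "\<dots> = chi n D + (\<Sum>B\<in>insert h ` Pow D. (-1)^card B * (monom 1 (n - arr_rank n B) :: real poly))"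
    unfolding chi_def by (rule sum.union_disjoint) (use assms in auto)
  also have "(\<Sum>B\<in>insert h ` Pow D. (-1)^card B * (monom 1 (n - arr_rank n B) :: real poly)) =
       (\<Sum>B\<in>Pow D. (-1)^card (insert h B) * (monom 1 (n - arr_rank n (insert h B)) :: real poly))"
  proof (rule sum.reindex[unfolded comp_def])
    show "inj_on (insert h) (Pow D)" using assms(2) by (auto simp: inj_on_def)
  qed
  also have "\<dots> = (\<Sum>B\<in>Pow D. - ((-1)^card B * (monom 1 (n - arr_rank n (insert h B)) :: real poly)))"
  proof (rule sum.cong[OF refl])
    fix B assume "B \<in> Pow D"
    hence "finite B" "h \<notin> B" using assms finite_subset by auto
    hence c: "card (insert h B) = Suc (card B)" by simp
    show "(-1)^card (insert h B) * (monom 1 (n - arr_rank n (insert h B)) :: real poly) = - ((-1)^card B * (monom 1 (n - arr_rank n (insert h B)) :: real poly))"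
      by (simp add: c)
  qed
  finally show ?thesis by (simp add: sum_negf)
qed

definition Dk :: "rat set \<Rightarrow> nat \<Rightarrow> nat \<Rightarrow> (nat \<Rightarrow> real) set set" where
  "Dk a n k = arrA a n - (\<lambda>j. hyperplane n (unitv j) 0) ` {..<k}"

lemma coord_in_arrA: "i < n \<Longrightarrow> hyperplane n (unitv i) 0 \<in> arrA a n"
  by (auto simp: arrA_def coord_hyps_def)

lemma unitv_ne0: "unitv i \<noteq> 0" by (auto simp: unitv_def fun_eq_iff)

lemma Dk_insert:
  assumes "k < n"
  shows "Dk a n k = insert (hyperplane n (unitv k) 0) (Dk a n (Suc k))"
    and "hyperplane n (unitv k) 0 \<notin> Dk a n (Suc k)"
proof -
  have "hyperplane n (unitv k) 0 \<notin> (\<lambda>j. hyperplane n (unitv j) 0) ` {..<k}"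
  proof
    assume "hyperplane n (unitv k) 0 \<in> (\<lambda>j. hyperplane n (unitv j) 0) ` {..<k}"
    then obtain j where "j < k" "hyperplane n (unitv k) 0 = hyperplane n (unitv j) 0" by auto
    moreover have "hyperplane n (unitv k) 0 \<noteq> hyperplane n (unitv j) 0"
      using calculation(1) assms unitv_Rn[of k n] by (intro ne_coord[where p = k]) (auto simp: unitv_def)
    ultimately show False by simp
  qed
  moreover have "{..<Suc k} = insert k {..<k}" by auto
  ultimately show "Dk a n k = insert (hyperplane n (unitv k) 0) (Dk a n (Suc k))"
    unfolding Dk_def using coord_in_arrA[OF assms, of a] by auto
  show "hyperplane n (unitv k) 0 \<notin> Dk a n (Suc k)" unfolding Dk_def by auto
qed

lemma fscale_zero[simp]: "fscale c 0 = 0" by (simp add: fscale_def fun_eq_iff)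

lemma in_Dk2:
  assumes "G \<in> arrA a n" "G = hyperplane n w 0" "w \<in> Rn n" "w p \<noteq> 0" "w q \<noteq> 0" "p \<noteq> q" "p < n" "q < n" "k < n"
  shows "G \<in> Dk a n (Suc k)"
proof -
  have neq: "hyperplane n w 0 \<noteq> hyperplane n (unitv j) 0" if "j < n" for j
  proof (cases "j = p")
    case True thus ?thesis using assms that by (intro ne_coord[where p = q]) auto
  next
    case False thus ?thesis using assms that by (intro ne_coord[where p = p]) auto
  qed
  have ne: "G \<notin> (\<lambda>j. hyperplane n (unitv j) 0) ` {..<Suc k}"
  proof
    assume "G \<in> (\<lambda>j. hyperplane n (unitv j) 0) ` {..<Suc k}"
    then obtain j where j: "j < Suc k" "G = hyperplane n (unitv j) 0" by blast
    have "j < n" using j(1) assms(9) by simp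
    from neq[OF this] j(2) assms(2) show False by simp
  qed
  thus ?thesis using assms(1) unfolding Dk_def by blast
qed

lemma in_Dk1:
  assumes "G \<in> arrA a n" "G = hyperplane n w 0" "w \<in> Rn n" "w p \<noteq> 0" "k < p" "p < n"
  shows "G \<in> Dk a n (Suc k)"
proof -
  have neq: "hyperplane n w 0 \<noteq> hyperplane n (unitv j) 0" if "j < Suc k" for j
    using assms that by (intro ne_coord[where p = p]) auto
  have ne: "G \<notin> (\<lambda>j. hyperplane n (unitv j) 0) ` {..<Suc k}"
  proof
    assume "G \<in> (\<lambda>j. hyperplane n (unitv j) 0) ` {..<Suc k}"
    then obtain j where j: "j < Suc k" "G = hyperplane n (unitv j) 0" by blast
    from neq[OF j(1)] j(2) assms(2) show False by simp
  qed
  thus ?thesis using assms(1) unfolding Dk_def by blast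
qed


lemma restr_hp': "k < n \<Longrightarrow> restr (n - Suc 0) k (hyperplane n w 0) = hyperplane (n - Suc 0) (del k w) 0"
  using restr_hp[of k n w] by simp

lemma pair_in_arrA: "i < j \<Longrightarrow> j < m \<Longrightarrow> hyperplane m (unitv i - unitv j) 0 \<in> arrA a m"
  unfolding arrA_def by blast

lemma triple_in_arrA: "i < m \<Longrightarrow> j < m \<Longrightarrow> i \<noteq> j \<Longrightarrow> r \<in> a \<Longrightarrow>
    hyperplane m (unitv i - fscale (of_rat r) (unitv j)) 0 \<in> arrA a m"
  unfolding arrA_def by blast

lemma neg_fscale: "0 - fscale c w = fscale (- c) w" by (simp add: fun_eq_iff)

lemma restr_sub:
  assumes a: "\<forall>r\<in>a. r > 0 \<and> r \<noteq> 1" and k: "k < n" and H: "H \<in> Dk a n (Suc k)"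
  shows "restr (n-1) k H \<in> arrA a (n-1)"
proof -
  have HA: "H \<in> arrA a n" and Hne: "\<And>j. j \<le> k \<Longrightarrow> H \<noteq> hyperplane n (unitv j) 0"
    using H unfolding Dk_def by auto
  show ?thesis using HA[unfolded arrA_def coord_hyps_def]
  proof (elim UnE CollectE exE conjE)
    fix i assume h: "H = hyperplane n (unitv i) 0" "i < n"
    have "\<not> i \<le> k" using Hne[of i] h(1) by blast
    hence "i \<noteq> k" "\<not> i < k" by auto
    hence "restr (n-1) k H = hyperplane (n-1) (unitv (idx k i)) 0"
      using h by (simp add: restr_hp'[OF k] del_unitv)
    moreover have "idx k i < n - 1" using idx_lt[OF \<open>i \<noteq> k\<close> h(2) k] .
    ultimately show ?thesis by (simp add: coord_in_arrA)
  next
    fix i j assume h: "H = hyperplane n (unitv i - unitv j) 0" "i < j" "j < n"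
    have R: "restr (n-1) k H = hyperplane (n-1) (del k (unitv i) - del k (unitv j)) 0"
      using h by (simp add: restr_hp'[OF k])
    consider "i = k" | "j = k" | "i \<noteq> k" "j \<noteq> k" by blast
    thus ?thesis
    proof cases
      case 1
      hence "restr (n-1) k H = hyperplane (n-1) (- unitv (idx k j)) 0" using R h by (simp add: del_unitv)
      also have "\<dots> = hyperplane (n-1) (unitv (idx k j)) 0" by (rule hp_neg)
      finally show ?thesis using idx_lt[of j k n] h 1 k by (simp add: coord_in_arrA)
    next
      case 2
      hence "restr (n-1) k H = hyperplane (n-1) (unitv (idx k i)) 0" using R h by (simp add: del_unitv)
      thus ?thesis using idx_lt[of i k n] h 2 k by (simp add: coord_in_arrA)
    next
      case 3
      hence "restr (n-1) k H = hyperplane (n-1) (unitv (idx k i) - unitv (idx k j)) 0" using R h by (simp add: del_unitv)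
      thus ?thesis using idx_lt[of j k n] idx_mono[of i j k] h 3 k by (simp add: pair_in_arrA)
    qed
  next
    fix i j r assume h: "H = hyperplane n (unitv i - fscale (of_rat r) (unitv j)) 0" "i < n" "j < n" "i \<noteq> j" "r \<in> a"
    have rpos: "of_rat r \<noteq> (0::real)" using a h(5) by auto
    have R: "restr (n-1) k H = hyperplane (n-1) (del k (unitv i) - fscale (of_rat r) (del k (unitv j))) 0"
      using h by (simp add: restr_hp'[OF k])
    consider "i = k" | "j = k" | "i \<noteq> k" "j \<noteq> k" by blast
    thus ?thesis
    proof cases
      case 1
      hence "restr (n-1) k H = hyperplane (n-1) (fscale (- of_rat r) (unitv (idx k j))) 0"
        using R h by (simp add: del_unitv neg_fscale)
      also have "\<dots> = hyperplane (n-1) (unitv (idx k j)) 0" by (rule hp_scale) (use rpos in simp)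
      finally show ?thesis using idx_lt[of j k n] h 1 k by (simp add: coord_in_arrA)
    next
      case 2
      hence "restr (n-1) k H = hyperplane (n-1) (unitv (idx k i)) 0" using R h by (simp add: del_unitv)
      thus ?thesis using idx_lt[of i k n] h 2 k by (simp add: coord_in_arrA)
    next
      case 3
      hence "restr (n-1) k H = hyperplane (n-1) (unitv (idx k i) - fscale (of_rat r) (unitv (idx k j))) 0"
        using R h by (simp add: del_unitv)
      thus ?thesis using idx_lt[of j k n] idx_lt[of i k n] idx_inj[of i j k] h 3 k by (simp add: triple_in_arrA)
    qed
  qed
qed

lemma restr_sup:
  assumes a: "\<forall>r\<in>a. r > 0 \<and> r \<noteq> 1" and k: "k < n" and H: "H \<in> arrA a (n-1)"
  shows "H \<in> restr (n-1) k ` Dk a n (Suc k)"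
  using H unfolding arrA_def coord_hyps_def
proof (elim UnE CollectE exE conjE)
  fix m assume h: "H = hyperplane (n-1) (unitv m) 0" "m < n - 1"
  show ?thesis
  proof (cases "m < k")
    case True
    define G where "G = hyperplane n (unitv m - unitv k) 0"
    have "G \<in> Dk a n (Suc k)"
      by (rule in_Dk2[where w = "unitv m - unitv k" and p = m and q = k])
         (use True k pair_in_arrA[of m k n a] Rn_diff[OF unitv_Rn[of m n] unitv_Rn[of k n]] in \<open>auto simp: G_def unitv_def\<close>)
    moreover have "restr (n-1) k G = H" using True k h
      by (simp add: G_def restr_hp' del_unitv idx_def)
    ultimately show ?thesis by blast
  next
    case False
    define G where "G = hyperplane n (unitv (Suc m)) 0"
    have "G \<in> Dk a n (Suc k)"
      by (rule in_Dk1[where w = "unitv (Suc m)" and p = "Suc m"])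
         (use False k h coord_in_arrA[of "Suc m" n a] unitv_Rn[of "Suc m" n] in \<open>auto simp: G_def unitv_def\<close>)
    moreover have "restr (n-1) k G = H" using False k h
      by (simp add: G_def restr_hp' del_unitv idx_def)
    ultimately show ?thesis by blast
  qed
next
  fix i j assume h: "H = hyperplane (n-1) (unitv i - unitv j) 0" "i < j" "j < n - 1"
  define G where "G = hyperplane n (unitv (skip k i) - unitv (skip k j)) 0"
  have lt: "skip k i < skip k j" "skip k j < n" "skip k i < n"
    using h k skip_mono[of i j k] skip_lt[of k n] by auto
  have "G \<in> Dk a n (Suc k)"
    by (rule in_Dk2[where w = "unitv (skip k i) - unitv (skip k j)" and p = "skip k i" and q = "skip k j"])
       (use lt k pair_in_arrA[of "skip k i" "skip k j" n a] Rn_diff[OF unitv_Rn[of "skip k i" n] unitv_Rn[of "skip k j" n]] in \<open>auto simp: G_def unitv_def\<close>)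
  moreover have "restr (n-1) k G = H" using k h by (simp add: G_def restr_hp')
  ultimately show ?thesis by blast
next
  fix i j r assume h: "H = hyperplane (n-1) (unitv i - fscale (of_rat r) (unitv j)) 0" "i < n - 1" "j < n - 1" "i \<noteq> j" "r \<in> a"
  have rpos: "of_rat r \<noteq> (0::real)" using a h(5) by auto
  define G where "G = hyperplane n (unitv (skip k i) - fscale (of_rat r) (unitv (skip k j))) 0"
  have lt: "skip k i \<noteq> skip k j" "skip k j < n" "skip k i < n"
    using h k skip_lt[of k n] inj_skip[of k] by (auto simp: inj_def)
  have "G \<in> Dk a n (Suc k)"
    by (rule in_Dk2[where w = "unitv (skip k i) - fscale (of_rat r) (unitv (skip k j))" and p = "skip k i" and q = "skip k j"])
       (use lt k h rpos triple_in_arrA[of "skip k i" n "skip k j" r a] Rn_diff[OF unitv_Rn[of "skip k i" n] Rn_scale[OF unitv_Rn[of "skip k j" n]]] in \<open>auto simp: G_def unitv_def\<close>)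
  moreover have "restr (n-1) k G = H" using k h by (simp add: G_def restr_hp')
  ultimately show ?thesis by blast
qed

lemma restr_image:
  assumes a: "\<forall>r\<in>a. r > 0 \<and> r \<noteq> 1" and k: "k < n"
  shows "restr (n-1) k ` Dk a n (Suc k) = arrA a (n-1)"
  using restr_sub[OF a k] restr_sup[OF a k] by blast


lemma rank_formula:
  assumes a: "\<forall>r\<in>a. r > 0 \<and> r \<noteq> 1" and fa: "finite a" and k: "k < n" and B: "B \<subseteq> Dk a n (Suc k)"
  shows "arr_rank n (insert (hyperplane n (unitv k) 0) B) = Suc (arr_rank (n-1) (restr (n-1) k ` B))"
proof -
  define nv where "nv H = (SOME w. w \<in> goodv n \<and> H = hyperplane n w 0)" for H
  have BA: "B \<subseteq> arrA a n" using B by (auto simp: Dk_def)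
  have nvH: "nv H \<in> goodv n \<and> H = hyperplane n (nv H) 0" if "H \<in> B" for H
  proof -
    have "H \<in> arrA a n" using BA that by blast
    hence "\<exists>w. w \<in> goodv n \<and> H = hyperplane n w 0" using good_arrA[OF a] by blast
    thus ?thesis unfolding nv_def by (rule someI_ex)
  qed
  define V where "V = nv ` B"
  have fB: "finite B" using finite_arrA[OF fa] BA finite_subset by blast
  have fV: "finite V" using fB V_def by simp
  have "(\<lambda>w. hyperplane n w 0) ` V = (\<lambda>H. H) ` B"
    unfolding V_def image_image
  proof (rule image_cong[OF refl])
    fix H assume "H \<in> B"
    from nvH[OF this] have "H = hyperplane n (nv H) 0" by blast
    thus "hyperplane n (nv H) 0 = H" by (rule sym)
  qed
  hence VB: "(\<lambda>w. hyperplane n w 0) ` V = B" by simp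
  have Vg: "V \<subseteq> goodv n" using nvH unfolding V_def by blast
  have ug: "unitv k \<in> goodv n" using k by (simp add: goodv_def unitv_Rn unitv_ne0)
  have "insert (hyperplane n (unitv k) 0) B = (\<lambda>w. hyperplane n w 0) ` insert (unitv k) V" using VB by auto
  hence "arr_rank n (insert (hyperplane n (unitv k) 0) B) = V.dim (insert (unitv k) V)"
    using rank_image[of "insert (unitv k) V" n] Vg ug by simp
  also have "\<dots> = Suc (V.dim (del k ` V))" by (rule dim_insert_unitv[OF fV])
  also have "restr (n-1) k ` B = (\<lambda>w. hyperplane (n-1) w 0) ` (del k ` V)"
    unfolding VB[symmetric] image_image using restr_hp[OF k] by simp
  moreover have "del k ` V \<subseteq> goodv (n-1)"
  proof
    fix u assume "u \<in> del k ` V"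
    then obtain H where H: "H \<in> B" "u = del k (nv H)" by (auto simp: V_def)
    let ?w = "nv H"
    have wg: "?w \<in> Rn n" "?w \<noteq> 0" "H = hyperplane n ?w 0" using nvH[OF H(1)] by (auto simp: goodv_def)
    have "u \<noteq> 0"
    proof
      assume "u = 0"
      hence w: "?w = fscale (?w k) (unitv k)" using H(2) \<open>u = 0\<close> del_zero_imp[of k "nv H"] by simp
      have "?w k \<noteq> 0"
      proof
        assume "?w k = 0" hence "?w = 0" using w by (simp add: fun_eq_iff)
        thus False using wg(2) by simp
      qed
      hence "H = hyperplane n (unitv k) 0" using wg(3) w hp_scale by metis
      moreover have "hyperplane n (unitv k) 0 \<notin> Dk a n (Suc k)" by (simp add: Dk_def)
      ultimately show False using H(1) B by blast
    qed
    moreover have "u \<in> Rn (n-1)" using H(2) del_Rn[OF k wg(1)] by simp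
    ultimately show "u \<in> goodv (n-1)" by (simp add: goodv_def)
  qed
  ultimately show ?thesis using rank_image[of "del k ` V" "n-1"] by simp
qed

lemma finite_Dk: "finite a \<Longrightarrow> finite (Dk a n k)"
  using finite_arrA[of a n] by (simp add: Dk_def)

lemma key:
  assumes a: "\<forall>r\<in>a. r > 0 \<and> r \<noteq> 1" and fa: "finite a" and k: "k < n"
  shows "(\<Sum>B\<in>Pow (Dk a n (Suc k)). (-1)^card B * (monom 1 (n - arr_rank n (insert (hyperplane n (unitv k) 0) B)) :: real poly))
     = chi (n-1) (arrA a (n-1))"
proof -
  have "(\<Sum>B\<in>Pow (Dk a n (Suc k)). (-1)^card B * (monom 1 (n - arr_rank n (insert (hyperplane n (unitv k) 0) B)) :: real poly))
      = (\<Sum>R\<in>Pow (restr (n-1) k ` Dk a n (Suc k)). (-1)^card R * (monom 1 (n - Suc (arr_rank (n-1) R)) :: real poly))"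
    by (rule group_restr[where D="Dk a n (Suc k)" and rk="\<lambda>B. arr_rank n (insert (hyperplane n (unitv k) 0) B)"
        and rk'="\<lambda>R. Suc (arr_rank (n-1) R)" and f="restr (n-1) k" and g="\<lambda>m. (monom 1 (n - m) :: real poly)",
        OF finite_Dk[OF fa]]) (rule rank_formula[OF a fa k])
  also have "\<dots> = chi (n-1) (arrA a (n-1))"
    unfolding restr_image[OF a k] chi_def
  proof (rule sum.cong[OF refl])
    fix R
    have "n - Suc (arr_rank (n-1) R) = (n - 1) - arr_rank (n-1) R" by simp
    thus "(-1)^card R * (monom 1 (n - Suc (arr_rank (n-1) R)) :: real poly) = (-1)^card R * monom 1 ((n - 1) - arr_rank (n-1) R)"
      by (simp only:)
  qed
  finally show ?thesis .
qed

lemma peel: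
  assumes a: "\<forall>r\<in>a. r > 0 \<and> r \<noteq> 1" and fa: "finite a"
  shows "k \<le> n \<Longrightarrow> chi n (arrA a n) = chi n (Dk a n k) - of_nat k * chi (n-1) (arrA a (n-1))"
proof (induction k)
  case 0
  have "Dk a n 0 = arrA a n" by (simp add: Dk_def)
  thus ?case by simp
next
  case (Suc k)
  hence k: "k < n" by simp
  have "chi n (Dk a n k) = chi n (Dk a n (Suc k)) - chi (n-1) (arrA a (n-1))"
    using chi_insert[OF finite_Dk[OF fa] Dk_insert(2)[OF k], of n] Dk_insert(1)[OF k] key[OF a fa k] by simp
  thus ?case using Suc.IH k by (simp add: algebra_simps)
qed

theorem mainTheorem3:
  fixes a :: "rat set" and n :: nat
  assumes "finite a"
    and "\<forall>r\<in>a. r > 0 \<and> r \<noteq> 1"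
    and "n \<ge> 1"
  shows "char_poly n (arrA' a n) = char_poly n (arrA a n) + of_nat n * char_poly (n - 1) (arrA a (n - 1))"
proof -
  have D: "Dk a n n = arrA' a n" by (auto simp: Dk_def arrA'_def coord_hyps_def)
  have "char_poly n (arrA' a n) = chi n (arrA' a n)" by (rule char_poly_chi[of _ a]) (auto simp: arrA'_def)
  moreover have "char_poly n (arrA a n) = chi n (arrA a n)" by (rule char_poly_chi[of _ a]) simp
  moreover have "char_poly (n-1) (arrA a (n-1)) = chi (n-1) (arrA a (n-1))" by (rule char_poly_chi[of _ a]) simp
  moreover have "chi n (arrA a n) = chi n (arrA' a n) - of_nat n * chi (n-1) (arrA a (n-1))"
    using peel[OF assms(2,1), of n n] D by simp
  ultimately show ?thesis by simp
qed

end
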